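(* Assume $0<p<1$, $0<q<1$, $0<r<1$ and let $x_{w_1,w_2}$ ($w_1,w_2\ge0$, $w_1+w_2\ge1$) be the positive numbers defined in the context. (a) For every fixed $w_1\ge 0$, as $w_2\to\infty$, $$x_{w_1,w_2}\sim C(w_1)\,w_2^{-\left(1+\frac{\beta_1+1}{\alpha_2}\right)},\qquad C(w_1)=\frac{r}{\alpha_2}\,\frac{1}{w_1!}\,\frac{\Gamma\!\left(w_1+\frac{\beta_1}{\alpha_1}\right)}{\Gamma\!\left(\frac{\beta_1}{\alpha_1}\right)}\,\frac{\Gamma\!\left(1+\frac{\beta+1}{\alpha_2}\right)}{\Gamma\!\left(1+\frac{\beta_2}{\alpha_2}\right)}.$$ (b) Symmetrically, for every fixed $w_2\ge0$, as $w_1\to\infty$, $$x_{w_1,w_2}\sim C'(w_2)\,w_1^{-\left(1+\frac{\beta_2+1}{\alpha_1}\right)},\qquad C'(w_2)=\frac{1-r}{\alpha_1}\,\frac{1}{w_2!}\,\frac{\Gamma\!\left(w_2+\frac{\beta_2}{\alpha_2}\right)}{\Gamma\!\left(\frac{\beta_2}{\alpha_2}\right)}\,\frac{\Gamma\!\left(1+\frac{\beta+1}{\alpha_1}\right)}{\Gamma\!\left(1+\frac{\beta_1}{\alpha_1}\right)}.$$ Here $a_k\sim b_k$ means $a_k/b_k\to1$ and $\Gamma$ is the Gamma function.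
   Context: Fix an integer $N\ge 3$ and $0<p<1$, $0<q<1$, $0<r<1$. Parameters: $\alpha_1=pr+(1-p)q$, $\alpha_2=pr\frac{N-2}{N-1}+(1-p)q$, $\beta_1=\frac{(1-p)(1-q)}{p}$, $\beta_2=(N-1)\left[(1-r)+\frac{(1-p)(1-q)}{p}\right]$, $\beta=\beta_1+\beta_2$. The numbers $x_{w_1,w_2}$ (integers $w_1,w_2\ge0$, $w_1+w_2\ge1$) are defined by $x_{1,0}=\frac{1-r}{\alpha_1+\beta+1}$, $x_{0,1}=\frac{r}{\alpha_2+\beta+1}$, and for $w_1+w_2>1$ $x_{w_1,w_2}=\frac{(\alpha_1(w_1-1)+\beta_1)x_{w_1-1,w_2}+(\alpha_2(w_2-1)+\beta_2)x_{w_1,w_2-1}}{\alpha_1w_1+\alpha_2w_2+\beta+1}$, with the convention $x_{w_1,w_2}=0$ if $w_1<0$ or $w_2<0$. (In the paper $x_{w_1,w_2}$ is the almost sure limiting proportion of vertices with central weight $w_1$ and peripheral weight $w_2$ in a star-interaction random graph process.) *)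

theory Defs
  imports "HOL-Analysis.Analysis" "HOL-Library.Landau_Symbols"
begin

definition alpha1 :: "nat \<Rightarrow> real \<Rightarrow> real \<Rightarrow> real \<Rightarrow> real" where
  "alpha1 N p q r = p * r + (1 - p) * q"

definition alpha2 :: "nat \<Rightarrow> real \<Rightarrow> real \<Rightarrow> real \<Rightarrow> real" where
  "alpha2 N p q r = p * r * (real N - 2) / (real N - 1) + (1 - p) * q"

definition beta1 :: "nat \<Rightarrow> real \<Rightarrow> real \<Rightarrow> real \<Rightarrow> real" where
  "beta1 N p q r = (1 - p) * (1 - q) / p"

definition beta2 :: "nat \<Rightarrow> real \<Rightarrow> real \<Rightarrow> real \<Rightarrow> real" where
  "beta2 N p q r = (real N - 1) * ((1 - r) + (1 - p) * (1 - q) / p)"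

definition beta :: "nat \<Rightarrow> real \<Rightarrow> real \<Rightarrow> real \<Rightarrow> real" where
  "beta N p q r = beta1 N p q r + beta2 N p q r"

text \<open>The limiting proportions x_{w1,w2}. The value at (0,0) is not used by the
  paper (index set is w1+w2>=1) and is set to 0 here; it never enters the recursion
  for w1+w2>=1.\<close>
function xw :: "nat \<Rightarrow> real \<Rightarrow> real \<Rightarrow> real \<Rightarrow> nat \<Rightarrow> nat \<Rightarrow> real" where
  "xw N p q r w1 w2 =
    (if w1 + w2 = 0 then 0
     else if w1 = 1 \<and> w2 = 0 then
       (1 - r) / (alpha1 N p q r + beta N p q r + 1)
     else if w1 = 0 \<and> w2 = 1 then
       r / (alpha2 N p q r + beta N p q r + 1)
     else
       ((if w1 = 0 then 0 else
          (alpha1 N p q r * (real w1 - 1) + beta1 N p q r) * xw N p q r (w1 - 1) w2)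
        + (if w2 = 0 then 0 else
          (alpha2 N p q r * (real w2 - 1) + beta2 N p q r) * xw N p q r w1 (w2 - 1)))
       / (alpha1 N p q r * real w1 + alpha2 N p q r * real w2 + beta N p q r + 1))"
  by pat_completeness auto
termination
  by (relation "Wellfounded.measure (\<lambda>(N, p, q, r, w1, w2). w1 + w2)") auto

end

theory Submission
  imports Defs "HOL-Real_Asymp.Real_Asymp"
begin


lemma alg0: fixes F E Gx u Gu :: real
  assumes "Gx > 0" "u > 0" "Gu > 0"
  shows "F * E / (u * Gu / Gx) / Gx = F * E / (u * Gu)"
  using assms by (simp add: field_simps)

lemma G1:
  fixes x :: real assumes x: "x > 0"
  shows "(\<lambda>n. fact n * real n powr x / ((x + real n) * Gamma (x + real n))) \<longlonglongrightarrow> 1"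
proof -
  have nz: "x \<notin> \<int>\<^sub>\<le>\<^sub>0" using x by (auto elim!: nonpos_Ints_cases)
  have gx: "Gamma x > 0" using x by simp
  have "(\<lambda>n. Gamma_series x n / Gamma x) \<longlonglongrightarrow> Gamma x / Gamma x"
    by (intro tendsto_intros) (use gx in auto)
  hence L: "(\<lambda>n. Gamma_series x n / Gamma x) \<longlonglongrightarrow> 1" using gx by simp
  have "eventually (\<lambda>n. Gamma_series x n / Gamma x = fact n * real n powr x / ((x + real n) * Gamma (x + real n))) sequentially"
    using eventually_gt_at_top[of 0]
  proof eventually_elim
    case (elim n)
    have p: "pochhammer x (n+1) = Gamma (x + real (n+1)) / Gamma x"
      using pochhammer_Gamma[OF nz] by simp
    have g1: "Gamma (x + real (n+1)) = (x + real n) * Gamma (x + real n)"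
    proof -
      have "x + real n \<notin> \<int>\<^sub>\<le>\<^sub>0" using x by (auto dest: nonpos_Ints_nonpos)
      hence gp: "Gamma ((x + real n) + 1) = (x + real n) * Gamma (x + real n)" by (rule Gamma_plus1)
      have eqn: "x + real (n+1) = (x + real n) + 1" by simp
      show ?thesis by (simp only: eqn gp)
    qed
    have pos: "Gamma (x + real n) > 0" "x + real n > 0" using x by auto
    have ex: "exp (x * of_real (ln (of_nat n))) = real n powr x" using elim by (simp add: powr_def)
    show ?case unfolding Gamma_series_def p g1 ex alg0[OF gx pos(2) pos(1)] by simp
  qed
  with L show ?thesis by (rule Lim_transform_eventually)
qed

lemma alg1: fixes F X Y Gx Gy u v :: real
  assumes "F > 0" "X > 0" "Y>0" "Gx>0" "Gy>0" "u>0" "v>0"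
  shows "F * Y / (v * Gy) / (F * X / (u*Gx)) * (v/u) = Y / X * (Gx/Gy)"
  using assms by (simp add: field_simps)

lemma G2:
  fixes x y :: real assumes x: "x > 0" and y: "y > 0"
  shows "(\<lambda>n. Gamma (real n + x) / Gamma (real n + y) / real n powr (x - y)) \<longlonglongrightarrow> 1"
proof -
  define R where "R z n = fact n * real n powr z / ((z + real n) * Gamma (z + real n))" for z n
  have lim: "(\<lambda>n. R y n / R x n * ((y + real n) / (x + real n))) \<longlonglongrightarrow> 1 / 1 * 1"
    unfolding R_def
  proof (intro tendsto_intros G1 x y)
    show "(\<lambda>n. (y + real n) / (x + real n)) \<longlonglongrightarrow> 1" using x y by real_asymp
  qed simp
  have "eventually (\<lambda>n. R y n / R x n * ((y + real n) / (x + real n)) = Gamma (real n + x) / Gamma (real n + y) / real n powr (x - y)) sequentially"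
    using eventually_gt_at_top[of 0]
  proof eventually_elim
    case (elim n)
    have pos: "Gamma (x + real n) > 0" "x + real n > 0" "Gamma (y + real n) > 0" "y + real n > 0"
      using x y by auto
    have e: "Gamma (real n + x) = Gamma (x + real n)" "Gamma (real n + y) = Gamma (y + real n)"
      by (simp_all add: add.commute)
    have f: "fact n > (0::real)" "real n powr x > 0" "real n powr y > 0" using elim by auto
    show ?case unfolding R_def e alg1[OF f(1) f(2) f(3) pos(1) pos(3) pos(2) pos(4)]
      by (simp add: powr_diff) (simp add: mult.commute[of "real n powr _"])
  qed
  with lim show ?thesis by (auto intro: Lim_transform_eventually)
qed



lemma stolz:
  fixes F G :: "nat \<Rightarrow> real"
  assumes G: "filterlim G at_top sequentially"
    and pos: "\<And>n. G (Suc n) > G n"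
    and lim: "(\<lambda>n. (F (Suc n) - F n) / (G (Suc n) - G n)) \<longlonglongrightarrow> 1"
  shows "(\<lambda>n. F n / G n) \<longlonglongrightarrow> 1"
proof (rule LIMSEQ_I)
  fix e :: real assume e: "e > 0"
  from LIMSEQ_D[OF lim, of "e/2"] e obtain N where
    N: "\<And>n. n \<ge> N \<Longrightarrow> norm ((F (Suc n) - F n) / (G (Suc n) - G n) - 1) < e/2" by auto
  have step: "\<bar>(F (Suc n) - G (Suc n)) - (F n - G n)\<bar> \<le> e/2 * (G (Suc n) - G n)" if "n \<ge> N" for n
  proof -
    have d: "G (Suc n) - G n > 0" using pos[of n] by simp
    have "\<bar>(F (Suc n) - F n) / (G (Suc n) - G n) - 1\<bar> < e/2" using N[OF that] by simp
    also have "(F (Suc n) - F n) / (G (Suc n) - G n) - 1 = ((F (Suc n) - G (Suc n)) - (F n - G n)) / (G (Suc n) - G n)"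
      using d by (simp add: field_simps)
    finally have h: "\<bar>((F (Suc n) - G (Suc n)) - (F n - G n)) / (G (Suc n) - G n)\<bar> < e/2" .
    have "\<bar>((F (Suc n) - G (Suc n)) - (F n - G n))\<bar> / (G (Suc n) - G n) < e/2"
      using h by (simp add: abs_divide abs_of_pos[OF d])
    hence "\<bar>((F (Suc n) - G (Suc n)) - (F n - G n))\<bar> < e/2 * (G (Suc n) - G n)"
      using pos_divide_less_eq[OF d] by blast
    thus ?thesis by simp
  qed
  have acc: "\<bar>(F (N + k) - G (N + k)) - (F N - G N)\<bar> \<le> e/2 * (G (N + k) - G N)" for k
  proof (induction k)
    case 0 then show ?case by simp
  next
    case (Suc k)
    have "\<bar>(F (N + Suc k) - G (N + Suc k)) - (F N - G N)\<bar> \<le>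
          \<bar>(F (Suc (N + k)) - G (Suc (N + k))) - (F (N+k) - G (N+k))\<bar> + \<bar>(F (N + k) - G (N + k)) - (F N - G N)\<bar>"
      by simp
    also have "\<dots> \<le> e/2 * (G (Suc (N + k)) - G (N+k)) + e/2 * (G (N + k) - G N)"
      using step[of "N+k"] Suc.IH by (intro add_mono) auto
    also have "\<dots> = e/2 * (G (N + Suc k) - G N)" by (simp add: algebra_simps)
    finally show ?case .
  qed
  define M where "M = \<bar>F N - G N\<bar> + e/2 * \<bar>G N\<bar>"
  have M0: "M \<ge> 0" unfolding M_def using e by simp
  from G have "eventually (\<lambda>n. G n \<ge> 2 * M / e + 1) sequentially"
    by (simp add: filterlim_at_top)
  then obtain N3 where N3: "\<And>n. n \<ge> N3 \<Longrightarrow> G n \<ge> 2 * M / e + 1"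
    by (auto simp: eventually_sequentially)
  show "\<exists>no. \<forall>n\<ge>no. norm (F n / G n - 1) < e"
  proof (intro exI allI impI)
    fix n assume n: "n \<ge> max N N3"
    have Gn: "G n \<ge> 2 * M / e + 1" using N3 n by auto
    have Gpos: "G n > 0" using Gn M0 e by (smt (verit) divide_nonneg_pos)
    have MG: "M < e/2 * G n"
    proof -
      have "2 * M / e < G n" using Gn by simp
      hence "2 * M < G n * e" using e by (simp add: divide_less_eq)
      thus ?thesis by (simp add: algebra_simps)
    qed
    obtain k where k: "n = N + k" using n by (metis le_add_diff_inverse max.boundedE)
    have "\<bar>F n - G n\<bar> \<le> e/2 * (G n - G N) + \<bar>F N - G N\<bar>"
      using acc[of k] unfolding k by linarith
    also have "\<dots> \<le> e/2 * G n + M"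
    proof -
      have "e/2 * (- G N) \<le> e/2 * \<bar>G N\<bar>" by (rule mult_left_mono) (use e in auto)
      thus ?thesis unfolding M_def by (simp add: algebra_simps)
    qed
    also have "\<dots> < e * G n" using MG by simp
    finally have lt: "\<bar>F n - G n\<bar> < e * G n" .
    have eq: "F n / G n - 1 = (F n - G n) / G n" using Gpos by (simp add: field_simps)
    have "\<bar>F n - G n\<bar> / G n < e" using lt pos_divide_less_eq[OF Gpos] by blast
    hence "\<bar>(F n - G n) / G n\<bar> < e" by (simp add: abs_divide abs_of_pos[OF Gpos])
    thus "norm (F n / G n - 1) < e" unfolding eq by simp
  qed
qed



lemma Gamma_Suc_shift:
  fixes z :: real assumes "z + real m > 0"
  shows "Gamma (real (Suc m) + z) = (real m + z) * Gamma (real m + z)"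
proof -
  have "real m + z \<notin> \<int>\<^sub>\<le>\<^sub>0" using assms by (auto dest: nonpos_Ints_nonpos)
  hence gp: "Gamma ((real m + z) + 1) = (real m + z) * Gamma (real m + z)" by (rule Gamma_plus1)
  have eqn: "real (Suc m) + z = (real m + z) + 1" by simp
  show ?thesis by (simp only: eqn gp)
qed

lemma alg2: fixes A B fS uS fm Pm :: real
  assumes "A > 0" "B > 0" "fS * A = uS + B * fm"
  shows "Pm * A / B * fS - Pm * fm = Pm * A / B * uS / A"
proof -
  have h: "A * fS - B * fm = uS" using assms(3) by (simp add: algebra_simps)
  have "Pm * A / B * fS - Pm * fm = Pm / B * (A * fS - B * fm)" using assms(2) by (simp add: field_simps)
  also have "\<dots> = Pm / B * uS" using h by simp
  also have "\<dots> = Pm * A / B * uS / A" using assms(1) by simp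
  finally show ?thesis .
qed

lemma GS:
  fixes f u :: "nat \<Rightarrow> real" and a b g K :: real
  assumes b: "b > 0" and a: "a + 1 > 0" and d: "a + 1 - b - g > 0" and K: "K > 0"
    and rec: "\<And>w. w \<ge> 1 \<Longrightarrow> f w * (real w + a) = u w + (real w - 1 + b) * f (w - 1)"
    and ul: "(\<lambda>w. u w / (K * real w powr (-g))) \<longlonglongrightarrow> 1"
  shows "(\<lambda>w. f w / (K / (a + 1 - b - g) * real w powr (-g))) \<longlonglongrightarrow> 1"
proof -
  define d where "d = a + 1 - b - g"
  have d0: "d > 0" using d unfolding d_def .
  define P where "P w = Gamma (real w + (a + 1)) / Gamma (real w + b)" for w :: nat
  have Ppos: "P w > 0" for w unfolding P_def using a b by (intro divide_pos_pos Gamma_real_pos) auto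
  have Psuc: "P (Suc m) = P m * (real m + 1 + a) / (real m + b)" for m
  proof -
    have "Gamma (real (Suc m) + (a + 1)) = (real m + (a+1)) * Gamma (real m + (a+1))"
      by (rule Gamma_Suc_shift) (use a in simp)
    moreover have "Gamma (real (Suc m) + b) = (real m + b) * Gamma (real m + b)"
      by (rule Gamma_Suc_shift) (use b in simp)
    moreover have "Gamma (real m + b) > 0" "real m + b > 0" using b by auto
    ultimately show ?thesis unfolding P_def by (simp add: field_simps)
  qed
  have Plim: "(\<lambda>w. P w / real w powr (a + 1 - b)) \<longlonglongrightarrow> 1"
    unfolding P_def using G2[of "a+1" b] a b by simp
  define F where "F w = P w * f w" for w
  define G where "G w = K / d * real w powr d" for w :: nat
  have dF: "F (Suc m) - F m = P (Suc m) * u (Suc m) / (real (Suc m) + a)" for m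
  proof -
    have r: "f (Suc m) * (real (Suc m) + a) = u (Suc m) + (real m + b) * f m"
      using rec[of "Suc m"] by simp
    have p1: "real m + 1 + a > 0" "real m + b > 0" using a b by auto
    have r': "f (Suc m) * (real m + 1 + a) = u (Suc m) + (real m + b) * f m"
      using r by (simp add: add_ac)
    have e: "real (Suc m) + a = real m + 1 + a" by simp
    show ?thesis unfolding F_def Psuc e by (rule alg2[OF p1 r'])
  qed
  have Gpos: "G n < G (Suc n)" for n
    unfolding G_def using K d0 by (intro mult_strict_left_mono powr_less_mono2) auto
  have Gtop: "filterlim G at_top sequentially"
    unfolding G_def using K d0 by real_asymp
  have T1: "(\<lambda>n::nat. (real (Suc n)) powr d / (real (Suc n) + a) * d / (real (Suc n) powr d - real n powr d)) \<longlonglongrightarrow> 1"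
    using d0 by real_asymp
  have PS: "(\<lambda>n. P (Suc n) / real (Suc n) powr (a + 1 - b)) \<longlonglongrightarrow> 1"
    using Plim by (rule LIMSEQ_Suc)
  have US: "(\<lambda>n. u (Suc n) / (K * real (Suc n) powr (-g))) \<longlonglongrightarrow> 1"
    using ul by (rule LIMSEQ_Suc)
  have prod: "(\<lambda>n. P (Suc n) / real (Suc n) powr (a + 1 - b) * (u (Suc n) / (K * real (Suc n) powr (-g)))
      * ((real (Suc n)) powr d / (real (Suc n) + a) * d / (real (Suc n) powr d - real n powr d))) \<longlonglongrightarrow> 1 * 1 * 1"
    by (intro tendsto_mult PS US T1)
  have ratio: "(\<lambda>n. (F (Suc n) - F n) / (G (Suc n) - G n)) \<longlonglongrightarrow> 1"
  proof -
    have "P (Suc n) / real (Suc n) powr (a + 1 - b) * (u (Suc n) / (K * real (Suc n) powr (-g)))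
      * ((real (Suc n)) powr d / (real (Suc n) + a) * d / (real (Suc n) powr d - real n powr d))
      = (F (Suc n) - F n) / (G (Suc n) - G n)" for n
    proof -
      define s where "s = real (Suc n)"
      have s0: "s > 0" unfolding s_def by simp
      have e1: "s powr (a + 1 - b) = s powr d * s powr g" unfolding d_def
        by (simp add: powr_add[symmetric])
      have e2: "s powr (-g) = inverse (s powr g)" by (simp add: powr_minus)
      have pd: "s powr d > 0" "s powr g > 0" using s0 by auto
      have dpos: "s powr d - real n powr d > 0" unfolding s_def using d0
        by (simp add: powr_less_mono2)
      have sa: "s + a > 0" unfolding s_def using a by simp
      have "(F (Suc n) - F n) / (G (Suc n) - G n) = P (Suc n) * u (Suc n) / (s + a) / (K / d * (s powr d - real n powr d))"
        unfolding dF G_def s_def by (simp add: algebra_simps)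
      also have "\<dots> = P (Suc n) / s powr (a + 1 - b) * (u (Suc n) / (K * s powr (-g)))
        * (s powr d / (s + a) * d / (s powr d - real n powr d))"
        unfolding e1 e2 using pd dpos sa K d0 by (simp add: field_simps)
      finally show ?thesis unfolding s_def by simp
    qed
    with prod show ?thesis by simp
  qed
  have FG: "(\<lambda>n. F n / G n) \<longlonglongrightarrow> 1"
    by (rule stolz[OF Gtop Gpos ratio])
  have Pinv: "(\<lambda>w. inverse (P w / real w powr (a + 1 - b))) \<longlonglongrightarrow> inverse 1"
    by (intro tendsto_inverse Plim) simp
  have lim2: "(\<lambda>w. F w / G w * inverse (P w / real w powr (a + 1 - b))) \<longlonglongrightarrow> 1 * inverse 1"
    by (intro tendsto_mult FG Pinv)
  have "eventually (\<lambda>w. F w / G w * inverse (P w / real w powr (a + 1 - b)) = f w / (K / (a + 1 - b - g) * real w powr (-g))) sequentially"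
    using eventually_gt_at_top[of 0]
  proof eventually_elim
    case (elim w)
    define s where "s = real w"
    have s0: "s > 0" unfolding s_def using elim by simp
    have e1: "s powr (a + 1 - b) = s powr d * s powr g" unfolding d_def
      by (simp add: powr_add[symmetric])
    have e2: "s powr (-g) = inverse (s powr g)" by (simp add: powr_minus)
    have pd: "s powr d > 0" "s powr g > 0" using s0 by auto
    show ?case unfolding F_def G_def d_def[symmetric] s_def[symmetric] e1 e2
      using pd Ppos[of w] K d0 by (simp add: field_simps)
  qed
  with lim2 show ?thesis by (auto intro: Lim_transform_eventually)
qed



definition CC :: "real \<Rightarrow> real \<Rightarrow> real \<Rightarrow> real \<Rightarrow> real \<Rightarrow> real \<Rightarrow> nat \<Rightarrow> real" where
  "CC A1 A2 B1 B2 B c w1 = c / A2 * (1 / fact w1) * (Gamma (real w1 + B1 / A1) / Gamma (B1 / A1))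
     * (Gamma (1 + (B + 1) / A2) / Gamma (1 + B2 / A2))"

lemma alg3: fixes A2 U V X Y Pm :: real
  assumes "A2 > 0" "U > 0" "V > 0" "X * (A2 * U) = (A2 * V) * Y"
  shows "X * (Pm * U / V) = Y * Pm"
proof -
  have h: "X * U = V * Y" using assms(1,4) by (simp add: algebra_simps)
  have "X * (Pm * U / V) = Pm * (X * U) / V" by (simp add: algebra_simps)
  also have "\<dots> = Pm * (V * Y) / V" using h by simp
  also have "\<dots> = Y * Pm" using assms(3) by simp
  finally show ?thesis .
qed

lemma alg4: fixes A2 A1s B B2 w X Y Z C :: real
  assumes "A2 > 0" "X * (A1s + A2 * w + B + 1) = C * Y + (A2 * (w - 1) + B2) * Z"
  shows "X * (w + (A1s + B + 1) / A2) = C / A2 * Y + (w - 1 + B2 / A2) * Z"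
proof -
  have "X * (w + (A1s + B + 1) / A2) = X * (A1s + A2 * w + B + 1) / A2"
    using assms(1) by (simp add: field_simps)
  also have "\<dots> = (C * Y + (A2 * (w - 1) + B2) * Z) / A2" using assms(2) by simp
  also have "\<dots> = C / A2 * Y + (w - 1 + B2 / A2) * Z" using assms(1) by (simp add: field_simps)
  finally show ?thesis .
qed

lemma alg5: fixes A1 A2 B1 n m F Gw G0 R c :: real
  assumes "A1 > 0" "A2 > 0" "m > 0" "F > 0" "G0 > 0"
  shows "(A1 * n + B1) / A2 * (c / A2 * (1 / F) * (Gw / G0) * R) / (A1 * m / A2)
       = c / A2 * (1 / (m * F)) * ((n + B1 / A1) * Gw / G0) * R"
  using assms by (simp add: field_simps)

lemma alg6: fixes t A2 H c G :: real
  assumes "t > 0" "A2 > 0" "H > 0"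
  shows "c / (A2 * t) * (t * G / H) = c / A2 * (G / H)"
  using assms by (simp add: field_simps)

lemma CC_pos:
  assumes A1: "A1 > 0" and A2: "A2 > 0" and B1: "B1 > 0" and B2: "B2 > 0" and c: "c > 0" and B: "B \<ge> 0"
  shows "CC A1 A2 B1 B2 B c w > 0"
proof -
  have "(B + 1) / A2 > 0" "B2 / A2 > 0" "B1 / A1 > 0" using assms by auto
  hence "Gamma (1 + (B + 1) / A2) > 0" "Gamma (1 + B2 / A2) > 0" "Gamma (real w + B1 / A1) > 0"
    "Gamma (B1 / A1) > 0" by (intro Gamma_real_pos; simp add: add_pos_nonneg)+
  thus ?thesis unfolding CC_def using A2 c by (intro mult_pos_pos divide_pos_pos) auto
qed

lemma alg7: fixes k X C Z :: real
  assumes "k \<noteq> 0" shows "k * X / (k * C * Z) = X / (C * Z)"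
  using assms by simp

lemma main_abs:
  fixes x :: "nat \<Rightarrow> nat \<Rightarrow> real" and A1 A2 B1 B2 B c :: real
  assumes A1: "A1 > 0" and A2: "A2 > 0" and B1: "B1 > 0" and B2: "B2 > 0" and c: "c > 0"
    and BB: "B = B1 + B2"
    and x01: "x 0 1 = c / (A2 + B + 1)"
    and rec: "\<And>w1 w2. w1 + w2 \<ge> 2 \<Longrightarrow> x w1 w2 * (A1 * real w1 + A2 * real w2 + B + 1) =
        (if w1 = 0 then 0 else (A1 * (real w1 - 1) + B1) * x (w1 - 1) w2)
      + (if w2 = 0 then 0 else (A2 * (real w2 - 1) + B2) * x w1 (w2 - 1))"
  shows "(\<lambda>w2. x w1 w2 / (CC A1 A2 B1 B2 B c w1 * real w2 powr (-(1 + (B1 + 1) / A2)))) \<longlonglongrightarrow> 1"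
proof (induction w1)
  define b where "b = B2 / A2"
  define g where "g = 1 + (B1 + 1) / A2"
  have b0: "b > 0" unfolding b_def using A2 B2 by simp
  case 0
  define a where "a = (B + 1) / A2"
  have a0: "a + 1 > 0" unfolding a_def BB using A2 B1 B2 by (smt (verit) divide_pos_pos)
  have ag: "a + 1 - b = g" unfolding a_def b_def g_def BB using A2 by (simp add: field_simps)
  define P where "P w = Gamma (real w + (a + 1)) / Gamma (real w + b)" for w :: nat
  have Ppos: "P w > 0" for w unfolding P_def using a0 b0 by (intro divide_pos_pos Gamma_real_pos) auto
  have Psuc: "P (Suc m) = P m * (real m + 1 + a) / (real m + b)" for m
  proof -
    have "Gamma (real (Suc m) + (a + 1)) = (real m + (a+1)) * Gamma (real m + (a+1))"
      by (rule Gamma_Suc_shift) (use a0 in simp)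
    moreover have "Gamma (real (Suc m) + b) = (real m + b) * Gamma (real m + b)"
      by (rule Gamma_Suc_shift) (use b0 in simp)
    moreover have "Gamma (real m + b) > 0" "real m + b > 0" using b0 by auto
    ultimately show ?thesis unfolding P_def by (simp add: field_simps)
  qed
  have inv: "x 0 (Suc m) * P (Suc m) = x 0 1 * P 1" for m
  proof (induction m)
    case 0 then show ?case by simp
  next
    case (Suc m)
    have r: "x 0 (Suc (Suc m)) * (A1 * real 0 + A2 * real (Suc (Suc m)) + B + 1) =
        (A2 * (real (Suc (Suc m)) - 1) + B2) * x 0 (Suc m)"
      using rec[of 0 "Suc (Suc m)"] by simp
    have U: "real (Suc m) + 1 + a > 0" "real (Suc m) + b > 0" using a0 b0 by auto
    have r': "x 0 (Suc (Suc m)) * (A2 * (real (Suc m) + 1 + a)) = (A2 * (real (Suc m) + b)) * x 0 (Suc m)"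
    proof -
      have e1: "A2 * (real (Suc m) + 1 + a) = A1 * real 0 + A2 * real (Suc (Suc m)) + B + 1"
        unfolding a_def using A2 by (simp add: field_simps)
      have e2: "A2 * (real (Suc m) + b) = A2 * (real (Suc (Suc m)) - 1) + B2"
        unfolding b_def using A2 by (simp add: field_simps)
      show ?thesis unfolding e1 e2 by (rule r)
    qed
    have "x 0 (Suc (Suc m)) * P (Suc (Suc m)) = x 0 (Suc m) * P (Suc m)"
      unfolding Psuc[of "Suc m"] by (rule alg3[OF A2 U r'])
    with Suc show ?case by simp
  qed
  have Plim: "(\<lambda>w. P w / real w powr g) \<longlonglongrightarrow> 1"
    unfolding P_def ag[symmetric] using G2[of "a+1" b] a0 b0 by simp
  have key: "x 0 1 * P 1 = CC A1 A2 B1 B2 B c 0"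
  proof -
    have g2: "Gamma (1 + (a + 1)) = (1 + a) * Gamma (1 + a)"
    proof -
      have "1 + a \<notin> \<int>\<^sub>\<le>\<^sub>0" using a0 by (auto dest: nonpos_Ints_nonpos)
      hence "Gamma ((1 + a) + 1) = (1 + a) * Gamma (1 + a)" by (rule Gamma_plus1)
      thus ?thesis by (simp add: add_ac)
    qed
    have d: "A2 + B + 1 = A2 * (1 + a)" unfolding a_def using A2 by (simp add: field_simps)
    have gp: "Gamma (1 + a) > 0" "Gamma (1 + b) > 0" "1 + a > 0" using a0 b0 by auto
    have "x 0 1 * P 1 = c / (A2 * (1 + a)) * ((1 + a) * Gamma (1 + a) / Gamma (1 + b))"
      unfolding x01 P_def d using g2 by (simp add: add_ac)
    also have "\<dots> = c / A2 * (Gamma (1 + a) / Gamma (1 + b))" using alg6[OF gp(3) A2 gp(2)] .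
    also have "\<dots> = CC A1 A2 B1 B2 B c 0" unfolding CC_def a_def b_def
    proof -
      have "Gamma (B1 / A1) > 0" using B1 A1 by simp
      thus "c / A2 * (Gamma (1 + (B + 1) / A2) / Gamma (1 + B2 / A2)) =
        c / A2 * (1 / fact 0) * (Gamma (real 0 + B1 / A1) / Gamma (B1 / A1)) *
        (Gamma (1 + (B + 1) / A2) / Gamma (1 + B2 / A2))" by simp
    qed
    finally show ?thesis .
  qed
  have Cpos: "CC A1 A2 B1 B2 B c 0 > 0" by (rule CC_pos[OF A1 A2 B1 B2 c]) (use BB B1 B2 in simp)
  have Pinv: "(\<lambda>w. inverse (P w / real w powr g)) \<longlonglongrightarrow> inverse 1"
    by (intro tendsto_inverse Plim) simp
  have "eventually (\<lambda>w. inverse (P w / real w powr g) = x 0 w / (CC A1 A2 B1 B2 B c 0 * real w powr (-g))) sequentially"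
    using eventually_gt_at_top[of 0]
  proof eventually_elim
    case (elim w)
    then obtain m where m: "w = Suc m" by (cases w) auto
    have xw: "x 0 w = CC A1 A2 B1 B2 B c 0 / P w" using inv[of m] Ppos[of w] unfolding m key
      by (simp add: field_simps)
    have pg: "real w powr g > 0" using elim by simp
    show ?case unfolding xw using pg Ppos[of w] Cpos by (simp add: powr_minus field_simps)
  qed
  with Pinv show ?case unfolding g_def by (auto intro: Lim_transform_eventually)
next
  case (Suc w1)
  define b where "b = B2 / A2"
  define g where "g = 1 + (B1 + 1) / A2"
  define a where "a = (A1 * real (Suc w1) + B + 1) / A2"
  define K where "K = (A1 * real w1 + B1) / A2 * CC A1 A2 B1 B2 B c w1"
  have b0: "b > 0" unfolding b_def using A2 B2 by simp
  have a0: "a + 1 > 0" unfolding a_def BB using A2 B1 B2 A1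
    by (smt (verit) divide_pos_pos of_nat_0_le_iff mult_nonneg_nonneg)
  have kk: "(A1 * real w1 + B1) / A2 > 0" using A1 A2 B1 by (intro divide_pos_pos add_nonneg_pos) auto
  have Cw: "CC A1 A2 B1 B2 B c w1 > 0" by (rule CC_pos[OF A1 A2 B1 B2 c]) (use BB B1 B2 in simp)
  have K0: "K > 0" unfolding K_def using kk Cw by (rule mult_pos_pos)
  have dd: "a + 1 - b - g = A1 * real (Suc w1) / A2" unfolding a_def b_def g_def BB using A2
    by (simp add: field_simps)
  have d0: "a + 1 - b - g > 0" unfolding dd using A1 A2 by simp
  have recw: "x (Suc w1) w * (real w + a) = (A1 * real w1 + B1) / A2 * x w1 w + (real w - 1 + b) * x (Suc w1) (w - 1)"
    if "w \<ge> 1" for w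
  proof -
    have r: "x (Suc w1) w * (A1 * real (Suc w1) + A2 * real w + B + 1) =
      (A1 * real w1 + B1) * x w1 w + (A2 * (real w - 1) + B2) * x (Suc w1) (w - 1)"
      using rec[of "Suc w1" w] that by simp
    show ?thesis unfolding a_def b_def by (rule alg4[OF A2 r])
  qed
  have ul: "(\<lambda>w. (A1 * real w1 + B1) / A2 * x w1 w / (K * real w powr (-g))) \<longlonglongrightarrow> 1"
  proof -
    have "(A1 * real w1 + B1) / A2 * x w1 w / (K * real w powr (-g)) =
        x w1 w / (CC A1 A2 B1 B2 B c w1 * real w powr (-g))" for w
      unfolding K_def by (rule alg7) (use kk in linarith)
    with Suc.IH show ?thesis unfolding g_def by simp
  qed
  have GSr: "(\<lambda>w. x (Suc w1) w / (K / (a + 1 - b - g) * real w powr (-g))) \<longlonglongrightarrow> 1"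
    by (rule GS[OF b0 a0 d0 K0 recw ul])
  have eqK: "K / (a + 1 - b - g) = CC A1 A2 B1 B2 B c (Suc w1)"
  proof -
    have gs: "Gamma (real (Suc w1) + B1 / A1) = (real w1 + B1 / A1) * Gamma (real w1 + B1 / A1)"
      by (rule Gamma_Suc_shift) (use A1 B1 in \<open>simp add: add_pos_nonneg\<close>)
    have f: "fact (Suc w1) = real (Suc w1) * fact w1" by simp
    have G0: "Gamma (B1 / A1) > 0" using A1 B1 by simp
    show ?thesis unfolding dd K_def CC_def gs f
      by (rule alg5[OF A1 A2 _ _ G0]) auto
  qed
  show ?case using GSr[unfolded eqK] unfolding g_def .
qed


theorem theorem3p4:
  fixes N :: nat and p q r :: real
  assumes "N \<ge> 3"
    and "0 < p" "p < 1" and "0 < q" "q < 1" and "0 < r" "r < 1"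
  shows
    "(\<forall>w1::nat.
       (\<lambda>w2::nat. xw N p q r w1 w2) \<sim>[at_top]
       (\<lambda>w2::nat.
          (r / alpha2 N p q r) * (1 / fact w1)
          * (Gamma (real w1 + beta1 N p q r / alpha1 N p q r) / Gamma (beta1 N p q r / alpha1 N p q r))
          * (Gamma (1 + (beta N p q r + 1) / alpha2 N p q r) / Gamma (1 + beta2 N p q r / alpha2 N p q r))
          * real w2 powr (- (1 + (beta1 N p q r + 1) / alpha2 N p q r))))
   \<and>
    (\<forall>w2::nat.
       (\<lambda>w1::nat. xw N p q r w1 w2) \<sim>[at_top]
       (\<lambda>w1::nat.
          ((1 - r) / alpha1 N p q r) * (1 / fact w2)
          * (Gamma (real w2 + beta2 N p q r / alpha2 N p q r) / Gamma (beta2 N p q r / alpha2 N p q r))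
          * (Gamma (1 + (beta N p q r + 1) / alpha1 N p q r) / Gamma (1 + beta1 N p q r / alpha1 N p q r))
          * real w1 powr (- (1 + (beta2 N p q r + 1) / alpha1 N p q r))))"
proof -
  let ?a1 = "alpha1 N p q r" and ?a2 = "alpha2 N p q r" and ?b1 = "beta1 N p q r"
    and ?b2 = "beta2 N p q r" and ?b = "beta N p q r"
  have N: "real N \<ge> 3" using assms(1) by simp
  have a1: "?a1 > 0" unfolding alpha1_def using assms by (intro add_pos_pos mult_pos_pos) auto
  have a2: "?a2 > 0" unfolding alpha2_def using assms N
    by (intro add_nonneg_pos divide_nonneg_pos mult_nonneg_nonneg mult_pos_pos) auto
  have b1: "?b1 > 0" unfolding beta1_def using assms by (intro divide_pos_pos mult_pos_pos) auto
  have b2: "?b2 > 0" unfolding beta2_def using assms N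
    by (intro mult_pos_pos add_pos_nonneg divide_nonneg_pos mult_nonneg_nonneg) auto
  have bb: "?b = ?b1 + ?b2" unfolding beta_def ..
  have bpos: "?b > 0" using bb b1 b2 by simp
  have xwrec: "xw N p q r w1 w2 * (?a1 * real w1 + ?a2 * real w2 + ?b + 1) =
        (if w1 = 0 then 0 else (?a1 * (real w1 - 1) + ?b1) * xw N p q r (w1 - 1) w2)
      + (if w2 = 0 then 0 else (?a2 * (real w2 - 1) + ?b2) * xw N p q r w1 (w2 - 1))"
    if h: "w1 + w2 \<ge> 2" for w1 w2
  proof -
    have D: "?a1 * real w1 + ?a2 * real w2 + ?b + 1 > 0"
      using a1 a2 bpos by (intro add_pos_pos add_nonneg_pos) auto
    have e: "xw N p q r w1 w2 = ((if w1 = 0 then 0 else (?a1 * (real w1 - 1) + ?b1) * xw N p q r (w1 - 1) w2)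
      + (if w2 = 0 then 0 else (?a2 * (real w2 - 1) + ?b2) * xw N p q r w1 (w2 - 1)))
        / (?a1 * real w1 + ?a2 * real w2 + ?b + 1)"
      using xw.simps[of N p q r w1 w2] h by (simp del: xw.simps)
    show ?thesis unfolding e using D by simp
  qed
  have x01: "xw N p q r 0 1 = r / (?a2 + ?b + 1)"
    using xw.simps[of N p q r 0 1] by (simp del: xw.simps)
  have x10: "xw N p q r 1 0 = (1 - r) / (?a1 + ?b + 1)"
    using xw.simps[of N p q r 1 0] by (simp del: xw.simps)
  have partA: "(\<lambda>w2. xw N p q r w1 w2 / (CC ?a1 ?a2 ?b1 ?b2 ?b r w1 * real w2 powr (-(1 + (?b1 + 1) / ?a2)))) \<longlonglongrightarrow> 1" for w1
    by (rule main_abs[OF a1 a2 b1 b2 assms(6) bb x01 xwrec])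
  have bb': "?b = ?b2 + ?b1" using bb by simp
  have r1: "1 - r > 0" using assms by simp
  have xwrec': "(\<lambda>u v. xw N p q r v u) w1 w2 * (?a2 * real w1 + ?a1 * real w2 + ?b + 1) =
        (if w1 = 0 then 0 else (?a2 * (real w1 - 1) + ?b2) * (\<lambda>u v. xw N p q r v u) (w1 - 1) w2)
      + (if w2 = 0 then 0 else (?a1 * (real w2 - 1) + ?b1) * (\<lambda>u v. xw N p q r v u) w1 (w2 - 1))"
    if h: "w1 + w2 \<ge> 2" for w1 w2
    using xwrec[of w2 w1] h by (simp add: ac_simps)
  have x10': "(\<lambda>u v. xw N p q r v u) 0 1 = (1 - r) / (?a1 + ?b + 1)" using x10 by simp
  have partB: "(\<lambda>w1. xw N p q r w1 w2 / (CC ?a2 ?a1 ?b2 ?b1 ?b (1 - r) w2 * real w1 powr (-(1 + (?b2 + 1) / ?a1)))) \<longlonglongrightarrow> 1" for w2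
    using main_abs[OF a2 a1 b2 b1 r1 bb' x10' xwrec', of w2] by simp
  show ?thesis
  proof (intro conjI allI)
    fix w1 show "(\<lambda>w2::nat. xw N p q r w1 w2) \<sim>[at_top]
       (\<lambda>w2::nat.
          (r / alpha2 N p q r) * (1 / fact w1)
          * (Gamma (real w1 + beta1 N p q r / alpha1 N p q r) / Gamma (beta1 N p q r / alpha1 N p q r))
          * (Gamma (1 + (beta N p q r + 1) / alpha2 N p q r) / Gamma (1 + beta2 N p q r / alpha2 N p q r))
          * real w2 powr (- (1 + (beta1 N p q r + 1) / alpha2 N p q r)))"
      using asymp_equivI'[OF partA[of w1]] unfolding CC_def .
  next
    fix w2 show "(\<lambda>w1::nat. xw N p q r w1 w2) \<sim>[at_top]
       (\<lambda>w1::nat.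
          ((1 - r) / alpha1 N p q r) * (1 / fact w2)
          * (Gamma (real w2 + beta2 N p q r / alpha2 N p q r) / Gamma (beta2 N p q r / alpha2 N p q r))
          * (Gamma (1 + (beta N p q r + 1) / alpha1 N p q r) / Gamma (1 + beta1 N p q r / alpha1 N p q r))
          * real w1 powr (- (1 + (beta2 N p q r + 1) / alpha1 N p q r)))"
      using asymp_equivI'[OF partB[of w2]] unfolding CC_def .
  qed
qed

end
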